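(* Let $A$ and $B$ be finite posets. Then: (1) $A^B=\emptyset$ if and only if $A=\emptyset$ and $B\neq\emptyset$. (2) $A^B$ is an antichain if and only if $A$ is an antichain or $B=\emptyset$; in that case $|A^B|=|A|^c$ if $A\neq\emptyset$ or $B\neq\emptyset$, where $c$ is the number of connected components of $B$, and $|A^B|=1$ if $A=B=\emptyset$. (3) Assume $A\neq\emptyset$ and let $f,g\in A^B$ with $f\le g$. Then $\mathrm{h}([f,g])=\mathrm{h}(A^B)$ (the height of the interval $[f,g]$ of $A^B$ equals the height of $A^B$) if and only if $f,g\in\mathcal D(A^B)$ and $\mathrm{h}([f(b),g(b)])=\mathrm{h}(A)$ for all $b\in B$, where $[f(b),g(b)]$ is an interval of $A$. (4) If $A\neq\emptyset$, then $\mathrm{h}(A^B)=\mathrm{h}(A)\,|B|$.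
   Context: For posets $P$ and $Q$, $P^Q$ denotes the set of order-preserving maps $Q\to P$, ordered pointwise: $f\le g$ iff $f(q)\le g(q)$ in $P$ for all $q\in Q$; in particular $P^\emptyset$ consists of the single empty map. $\mathcal D(P^Q)$ is the set of $g\in P^Q$ that are constant on each connected component of $Q$. For a finite non-empty poset $P$, its height $\mathrm{h}(P)$ is the largest value of $|K|-1$ over chains $K\subseteq P$. For $x\le y$ in a poset, $[x,y]=\{z: x\le z\le y\}$ is an interval, regarded as a poset. *)

theory Defs
  imports "HOL-Library.FuncSet"
begin

definition poset :: "'a set \<Rightarrow> ('a \<Rightarrow> 'a \<Rightarrow> bool) \<Rightarrow> bool" where
  "poset P le \<longleftrightarrow> (\<forall>x\<in>P. le x x)
     \<and> (\<forall>x\<in>P. \<forall>y\<in>P. le x y \<and> le y x \<longrightarrow> x = y)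
     \<and> (\<forall>x\<in>P. \<forall>y\<in>P. \<forall>z\<in>P. le x y \<and> le y z \<longrightarrow> le x z)"

text \<open>P^Q: order-preserving maps Q to P (extensional: undefined outside Q).\<close>
definition hom_set :: "'a set \<Rightarrow> ('a \<Rightarrow> 'a \<Rightarrow> bool) \<Rightarrow> 'b set \<Rightarrow> ('b \<Rightarrow> 'b \<Rightarrow> bool) \<Rightarrow> ('b \<Rightarrow> 'a) set" where
  "hom_set P leP Q leQ = {f \<in> Q \<rightarrow>\<^sub>E P. \<forall>x\<in>Q. \<forall>y\<in>Q. leQ x y \<longrightarrow> leP (f x) (f y)}"

definition pw_le :: "'b set \<Rightarrow> ('a \<Rightarrow> 'a \<Rightarrow> bool) \<Rightarrow> ('b \<Rightarrow> 'a) \<Rightarrow> ('b \<Rightarrow> 'a) \<Rightarrow> bool" where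
  "pw_le Q leP f g \<longleftrightarrow> (\<forall>q\<in>Q. leP (f q) (g q))"

definition antichain_on :: "'a set \<Rightarrow> ('a \<Rightarrow> 'a \<Rightarrow> bool) \<Rightarrow> bool" where
  "antichain_on P le \<longleftrightarrow> (\<forall>x\<in>P. \<forall>y\<in>P. le x y \<longrightarrow> x = y)"

definition chain_on :: "'a set \<Rightarrow> ('a \<Rightarrow> 'a \<Rightarrow> bool) \<Rightarrow> bool" where
  "chain_on K le \<longleftrightarrow> (\<forall>x\<in>K. \<forall>y\<in>K. le x y \<or> le y x)"

text \<open>Height: largest |K| - 1 over chains K in P (meant for finite non-empty P).\<close>
definition height :: "'a set \<Rightarrow> ('a \<Rightarrow> 'a \<Rightarrow> bool) \<Rightarrow> nat" where
  "height P le = Max {card K - 1 | K. K \<subseteq> P \<and> chain_on K le}"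

definition interval :: "'a set \<Rightarrow> ('a \<Rightarrow> 'a \<Rightarrow> bool) \<Rightarrow> 'a \<Rightarrow> 'a \<Rightarrow> 'a set" where
  "interval P le x y = {z \<in> P. le x z \<and> le z y}"

definition comparable_rel :: "'b set \<Rightarrow> ('b \<Rightarrow> 'b \<Rightarrow> bool) \<Rightarrow> ('b \<times> 'b) set" where
  "comparable_rel Q le = {(x, y). x \<in> Q \<and> y \<in> Q \<and> (le x y \<or> le y x)}"

definition components :: "'b set \<Rightarrow> ('b \<Rightarrow> 'b \<Rightarrow> bool) \<Rightarrow> 'b set set" where
  "components Q le = Q // ((comparable_rel Q le)\<^sup>*)"

definition D_set :: "'a set \<Rightarrow> ('a \<Rightarrow> 'a \<Rightarrow> bool) \<Rightarrow> 'b set \<Rightarrow> ('b \<Rightarrow> 'b \<Rightarrow> bool) \<Rightarrow> ('b \<Rightarrow> 'a) set" where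
  "D_set P leP Q leQ = {g \<in> hom_set P leP Q leQ. \<forall>C\<in>components Q leQ. \<forall>x\<in>C. \<forall>y\<in>C. g x = g y}"

end

theory Submission
  imports Defs
begin


lemma height_set_finite:
  assumes "finite P"
  shows "finite {card K - 1 | K. K \<subseteq> P \<and> chain_on K le}"
proof -
  have "{card K - 1 | K. K \<subseteq> P \<and> chain_on K le} \<subseteq> (\<lambda>K. card K - 1) ` Pow P" by auto
  thus ?thesis using assms finite_subset by blast
qed

lemma height_ub:
  assumes "finite P" "K \<subseteq> P" "chain_on K le"
  shows "card K - 1 \<le> height P le"
  unfolding height_def using assms height_set_finite[OF assms(1)]
  by (intro Max_ge) auto

lemma height_ex:
  assumes "finite P"
  obtains K where "K \<subseteq> P" "chain_on K le" "card K - 1 = height P le"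
proof -
  have ne: "{card K - 1 | K. K \<subseteq> P \<and> chain_on K le} \<noteq> {}"
  proof -
    have "0 \<in> {card K - 1 | K. K \<subseteq> P \<and> chain_on K le}"
      by (auto simp: chain_on_def intro!: exI[of _ "{}"])
    thus ?thesis by blast
  qed
  have "height P le \<in> {card K - 1 | K. K \<subseteq> P \<and> chain_on K le}"
    unfolding height_def using Max_in[OF height_set_finite[OF assms] ne] .
  thus ?thesis using that by auto
qed

lemma height_ex1:
  assumes "finite P" "P \<noteq> {}" "\<forall>x\<in>P. le x x"
  obtains K where "K \<subseteq> P" "chain_on K le" "card K = height P le + 1"
proof -
  obtain K where K: "K \<subseteq> P" "chain_on K le" "card K - 1 = height P le"
    using height_ex[OF assms(1)] by blast
  show ?thesis
  proof (cases "card K = 0")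
    case True
    obtain a where a: "a \<in> P" using assms(2) by auto
    have "chain_on {a} le" unfolding chain_on_def using a assms(3) by auto
    then show ?thesis using that[of "{a}"] a K True by auto
  next
    case False
    then show ?thesis using that[of K] K by auto
  qed
qed

lemma height_mono:
  assumes "finite P" "S \<subseteq> P"
  shows "height S le \<le> height P le"
proof -
  obtain K where "K \<subseteq> S" "chain_on K le" "card K - 1 = height S le"
    using height_ex[OF finite_subset[OF assms(2,1)]] by blast
  thus ?thesis using height_ub[OF assms(1), of K le] assms(2) by auto
qed



lemma posetD:
  assumes "poset A le"
  shows "x \<in> A \<Longrightarrow> le x x"
    and "x \<in> A \<Longrightarrow> y \<in> A \<Longrightarrow> le x y \<Longrightarrow> le y x \<Longrightarrow> x = y"
    and "x \<in> A \<Longrightarrow> y \<in> A \<Longrightarrow> z \<in> A \<Longrightarrow> le x y \<Longrightarrow> le y z \<Longrightarrow> le x z"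
  using assms unfolding poset_def by blast+

lemma chain_enum:
  assumes P: "poset A le" and KA: "K \<subseteq> A" and fK: "finite K" and ch: "chain_on K le"
    and cK: "card K = h + 1"
  obtains e where "\<forall>i\<le>h. e i \<in> K" "\<forall>i j. i \<le> j \<longrightarrow> j \<le> h \<longrightarrow> le (e i) (e j)"
    "\<forall>i j. i < j \<longrightarrow> j \<le> h \<longrightarrow> e i \<noteq> e j"
proof -
  define r where "r a = card {k\<in>K. le k a \<and> k \<noteq> a}" for a
  have r_lt: "r a < r b" if "a \<in> K" "b \<in> K" "le a b" "a \<noteq> b" for a b
  proof -
    have "{k\<in>K. le k a \<and> k \<noteq> a} \<subset> {k\<in>K. le k b \<and> k \<noteq> b}"
    proof
      show "{k\<in>K. le k a \<and> k \<noteq> a} \<subseteq> {k\<in>K. le k b \<and> k \<noteq> b}"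
      proof
        fix k assume k: "k \<in> {k\<in>K. le k a \<and> k \<noteq> a}"
        hence "le k b" using posetD(3)[OF P, of k a b] that KA by auto
        moreover have "k \<noteq> b"
        proof
          assume "k = b"
          hence "le b a" using k by auto
          thus False using posetD(2)[OF P, of a b] that KA by auto
        qed
        ultimately show "k \<in> {k\<in>K. le k b \<and> k \<noteq> b}" using k by auto
      qed
      show "{k\<in>K. le k a \<and> k \<noteq> a} \<noteq> {k\<in>K. le k b \<and> k \<noteq> b}" using that by auto
    qed
    thus ?thesis unfolding r_def by (intro psubset_card_mono) (use fK in auto)
  qed
  have inj: "inj_on r K"
  proof (rule inj_onI, rule ccontr)
    fix a b assume ab: "a \<in> K" "b \<in> K" "r a = r b" "a \<noteq> b"
    have "le a b \<or> le b a" using ch ab unfolding chain_on_def by auto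
    thus False using r_lt[of a b] r_lt[of b a] ab by auto
  qed
  have rng: "r ` K \<subseteq> {0..<h+1}"
  proof
    fix x assume "x \<in> r ` K"
    then obtain a where a: "a \<in> K" "x = r a" by auto
    have "{k\<in>K. le k a \<and> k \<noteq> a} \<subseteq> K - {a}" by auto
    hence "r a \<le> card (K - {a})" unfolding r_def by (intro card_mono) (use fK in auto)
    also have "\<dots> = h" using cK a fK by simp
    finally show "x \<in> {0..<h+1}" using a by auto
  qed
  have img: "r ` K = {0..<h+1}"
    using card_subset_eq[OF _ rng] card_image[OF inj] cK by auto
  define e where "e = inv_into K r"
  have eK: "e i \<in> K" and re: "r (e i) = i" if "i \<le> h" for i
    using that img unfolding e_def
    by (auto intro: inv_into_into f_inv_into_f simp del: atLeastLessThan_iff)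
       (metis atLeastLessThan_iff img inv_into_into le_imp_less_Suc zero_le Suc_eq_plus1,
        metis atLeastLessThan_iff img f_inv_into_f le_imp_less_Suc zero_le Suc_eq_plus1)
  show ?thesis
  proof (rule that)
    show "\<forall>i\<le>h. e i \<in> K" using eK by auto
    show "\<forall>i j. i \<le> j \<longrightarrow> j \<le> h \<longrightarrow> le (e i) (e j)"
    proof (intro allI impI)
      fix i j assume ij: "i \<le> j" "j \<le> h"
      show "le (e i) (e j)"
      proof (cases "e i = e j")
        case True thus ?thesis using posetD(1)[OF P] eK[of j] ij KA by auto
      next
        case False
        have "le (e i) (e j) \<or> le (e j) (e i)" using ch eK[of i] eK[of j] ij unfolding chain_on_def by auto
        moreover have "\<not> le (e j) (e i)"
          using r_lt[of "e j" "e i"] eK[of i] eK[of j] re[of i] re[of j] ij False by auto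
        ultimately show ?thesis by auto
      qed
    qed
    show "\<forall>i j. i < j \<longrightarrow> j \<le> h \<longrightarrow> e i \<noteq> e j"
      using re by (metis less_imp_le_nat order.strict_trans2 less_irrefl)
  qed
qed



lemma hom_set_finite:
  assumes "finite A" "finite B"
  shows "finite (hom_set A leA B leB)"
proof -
  have "hom_set A leA B leB \<subseteq> B \<rightarrow>\<^sub>E A" unfolding hom_set_def by auto
  thus ?thesis using finite_PiE[OF assms(2), of "\<lambda>_. A"] assms(1) finite_subset by blast
qed

lemma chain_upper:
  assumes PA: "poset A leA" and fA: "finite A" and fB: "finite B"
    and KF: "K \<subseteq> hom_set A leA B leB" and ch: "chain_on K (pw_le B leA)"
    and SA: "\<forall>b\<in>B. S b \<subseteq> A" and KS: "\<forall>k\<in>K. \<forall>b\<in>B. k b \<in> S b"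
  shows "card K \<le> (\<Sum>b\<in>B. height (S b) leA) + 1"
proof -
  have fK: "finite K" using hom_set_finite[OF fA fB] KF finite_subset by blast
  have KE: "k \<in> B \<rightarrow>\<^sub>E A" if "k \<in> K" for k using KF that unfolding hom_set_def by auto
  have KA: "k b \<in> A" if "k \<in> K" "b \<in> B" for k b using KE[OF that(1)] that(2) by (auto simp: PiE_iff)
  define D where "D k b = (\<lambda>k'. k' b) ` {k'\<in>K. leA (k' b) (k b)}" for k b
  define \<psi> where "\<psi> k = (\<Sum>b\<in>B. card (D k b) - 1)" for k
  define M where "M = (\<Sum>b\<in>B. height (S b) leA)"
  have bound: "\<psi> k \<le> M" if k: "k \<in> K" for k
    unfolding \<psi>_def M_def
  proof (rule sum_mono)
    fix b assume b: "b \<in> B"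
    define Kb where "Kb = (\<lambda>k'. k' b) ` K"
    have "D k b \<subseteq> Kb" unfolding D_def Kb_def by auto
    hence "card (D k b) \<le> card Kb" using fK unfolding Kb_def by (intro card_mono) auto
    moreover have "card Kb - 1 \<le> height (S b) leA"
    proof (rule height_ub)
      show "finite (S b)" using SA b fA finite_subset by blast
      show "Kb \<subseteq> S b" using KS b unfolding Kb_def by auto
      show "chain_on Kb leA" unfolding chain_on_def Kb_def
        using ch b unfolding chain_on_def pw_le_def by blast
    qed
    ultimately show "card (D k b) - 1 \<le> height (S b) leA" by linarith
  qed
  have lt: "\<psi> k < \<psi> k'" if kk: "k \<in> K" "k' \<in> K" "pw_le B leA k k'" "k \<noteq> k'" for k k'
  proof -
    obtain b0 where b0: "b0 \<in> B" "k b0 \<noteq> k' b0"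
      using PiE_ext[OF KE[OF kk(1)] KE[OF kk(2)]] kk(4) by blast
    have sub: "D k b \<subseteq> D k' b" if b: "b \<in> B" for b
    proof
      fix x assume "x \<in> D k b"
      then obtain k'' where k'': "k'' \<in> K" "leA (k'' b) (k b)" "x = k'' b" unfolding D_def by auto
      have "leA (k'' b) (k' b)"
        using posetD(3)[OF PA, of "k'' b" "k b" "k' b"] k'' kk b KA[of k'' b] KA[of k b] KA[of k' b] unfolding pw_le_def by blast
      thus "x \<in> D k' b" using k'' unfolding D_def by auto
    qed
    have ne: "k b \<in> D k b" if "b \<in> B" "k \<in> K" for b k
      unfolding D_def using that posetD(1)[OF PA, of "k b"] KA[of k b] by blast
    have fD: "finite (D k b)" for k b unfolding D_def using fK by auto
    show ?thesis unfolding \<psi>_def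
    proof (rule sum_strict_mono_ex1[OF fB])
      show "\<forall>b\<in>B. card (D k b) - 1 \<le> card (D k' b) - 1"
        using sub fD card_mono diff_le_mono by metis
      have "k' b0 \<notin> D k b0"
      proof
        assume "k' b0 \<in> D k b0"
        then obtain k'' where k'': "k'' \<in> K" "leA (k'' b0) (k b0)" "k' b0 = k'' b0" unfolding D_def by auto
        have "leA (k b0) (k' b0)" using kk b0 unfolding pw_le_def by auto
        thus False using posetD(2)[OF PA, of "k b0" "k' b0"] k'' b0 KA[of k b0] KA[of k' b0] kk by auto
      qed
      hence "D k b0 \<subset> D k' b0" using sub[OF b0(1)] ne[OF b0(1) kk(2)] by auto
      hence "card (D k b0) < card (D k' b0)" using fD psubset_card_mono by blast
      moreover have "card (D k b0) \<ge> 1" using ne[OF b0(1) kk(1)] fD[of k b0] by (metis One_nat_def Suc_leI card_gt_0_iff empty_iff)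
      ultimately have "card (D k b0) - 1 < card (D k' b0) - 1" by linarith
      thus "\<exists>b\<in>B. card (D k b) - 1 < card (D k' b) - 1" using b0 by blast
    qed
  qed
  have inj: "inj_on \<psi> K"
  proof (rule inj_onI, rule ccontr)
    fix a b assume ab: "a \<in> K" "b \<in> K" "\<psi> a = \<psi> b" "a \<noteq> b"
    have "pw_le B leA a b \<or> pw_le B leA b a" using ch ab unfolding chain_on_def by auto
    thus False using lt[of a b] lt[of b a] ab by auto
  qed
  have "card K = card (\<psi> ` K)" using card_image[OF inj] by simp
  also have "\<dots> \<le> card {0..M}" using bound by (intro card_mono) auto
  finally show ?thesis unfolding M_def by simp
qed



lemma strict_down_lt:
  assumes P: "poset A le" and KA: "K \<subseteq> A" and fK: "finite K"
    and ab: "a \<in> K" "b \<in> K" "le a b" "a \<noteq> b"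
  shows "card {k\<in>K. le k a \<and> k \<noteq> a} < card {k\<in>K. le k b \<and> k \<noteq> b}"
proof -
  have "{k\<in>K. le k a \<and> k \<noteq> a} \<subset> {k\<in>K. le k b \<and> k \<noteq> b}"
  proof
    show "{k\<in>K. le k a \<and> k \<noteq> a} \<subseteq> {k\<in>K. le k b \<and> k \<noteq> b}"
    proof
      fix k assume k: "k \<in> {k\<in>K. le k a \<and> k \<noteq> a}"
      hence "le k b" using posetD(3)[OF P, of k a b] ab KA by auto
      moreover have "k \<noteq> b"
      proof
        assume "k = b"
        hence "le b a" using k by auto
        thus False using posetD(2)[OF P, of a b] ab KA by auto
      qed
      ultimately show "k \<in> {k\<in>K. le k b \<and> k \<noteq> b}" using k by auto
    qed
    show "{k\<in>K. le k a \<and> k \<noteq> a} \<noteq> {k\<in>K. le k b \<and> k \<noteq> b}" using ab by auto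
  qed
  thus ?thesis by (intro psubset_card_mono) (use fK in auto)
qed

lemma linext:
  assumes PB: "poset B leB" and fB: "finite B"
  obtains pos where "bij_betw pos B {0..<card B}"
    "\<forall>x\<in>B. \<forall>y\<in>B. leB x y \<longrightarrow> pos x \<le> pos y"
proof -
  define n where "n = card B"
  obtain idx where idx: "bij_betw idx B {0..<n}" using ex_bij_betw_finite_nat[OF fB] n_def by blast
  have idxn: "idx x < n" if "x \<in> B" for x using idx that unfolding bij_betw_def by auto
  define \<rho> where "\<rho> x = card {k\<in>B. leB k x \<and> k \<noteq> x}" for x
  define \<kappa> where "\<kappa> x = \<rho> x * n + idx x" for x
  have klt: "\<kappa> x < \<kappa> y" if "x \<in> B" "y \<in> B" "leB x y" "x \<noteq> y" for x y
  proof -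
    have "\<rho> x < \<rho> y" unfolding \<rho>_def using strict_down_lt[OF PB _ fB] that by blast
    hence "\<rho> x * n + n \<le> \<rho> y * n" by (metis add.commute mult.commute mult_Suc_right mult_le_mono2 Suc_leI)
    thus ?thesis unfolding \<kappa>_def using idxn[OF that(1)] by linarith
  qed
  have kinj: "inj_on \<kappa> B"
  proof (rule inj_onI)
    fix x y assume xy: "x \<in> B" "y \<in> B" "\<kappa> x = \<kappa> y"
    have "\<kappa> x mod n = idx x" "\<kappa> y mod n = idx y" unfolding \<kappa>_def using idxn xy by auto
    hence "idx x = idx y" using xy by simp
    thus "x = y" using idx xy unfolding bij_betw_def inj_on_def by blast
  qed
  define pos where "pos x = card {y\<in>B. \<kappa> y < \<kappa> x}" for x
  have plt: "pos x < pos y" if "x \<in> B" "y \<in> B" "\<kappa> x < \<kappa> y" for x y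
  proof -
    have "{z\<in>B. \<kappa> z < \<kappa> x} \<subset> {z\<in>B. \<kappa> z < \<kappa> y}" using that by auto
    thus ?thesis unfolding pos_def by (intro psubset_card_mono) (use fB in auto)
  qed
  have pinj: "inj_on pos B"
  proof (rule inj_onI, rule ccontr)
    fix x y assume xy: "x \<in> B" "y \<in> B" "pos x = pos y" "x \<noteq> y"
    hence "\<kappa> x \<noteq> \<kappa> y" using kinj unfolding inj_on_def by blast
    thus False using plt[of x y] plt[of y x] xy by linarith
  qed
  have prng: "pos ` B \<subseteq> {0..<n}"
  proof
    fix z assume "z \<in> pos ` B"
    then obtain x where x: "x \<in> B" "z = pos x" by auto
    have "{y\<in>B. \<kappa> y < \<kappa> x} \<subseteq> B - {x}" by auto
    hence "pos x \<le> card (B - {x})" unfolding pos_def by (intro card_mono) (use fB in auto)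
    also have "\<dots> < n" proof -
      have "card B > 0" using x fB card_gt_0_iff by blast
      thus ?thesis using x fB n_def by simp
    qed
    finally show "z \<in> {0..<n}" using x by auto
  qed
  have "pos ` B = {0..<n}" using card_subset_eq[OF _ prng] card_image[OF pinj] n_def by auto
  hence "bij_betw pos B {0..<card B}" using pinj n_def unfolding bij_betw_def by auto
  moreover have "\<forall>x\<in>B. \<forall>y\<in>B. leB x y \<longrightarrow> pos x \<le> pos y"
    using klt plt by (metis order.order_iff_strict)
  ultimately show ?thesis using that by blast
qed



lemma chain_construct:
  assumes PA: "poset A leA" and PB: "poset B leB" and fB: "finite B"
    and cA: "\<forall>x\<in>B. \<forall>i\<le>h. c x i \<in> A"
    and cm: "\<forall>x\<in>B. \<forall>i j. i \<le> j \<longrightarrow> j \<le> h \<longrightarrow> leA (c x i) (c x j)"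
    and ci: "\<forall>x\<in>B. \<forall>i j. i < j \<longrightarrow> j \<le> h \<longrightarrow> c x i \<noteq> c x j"
    and cc: "\<forall>x\<in>B. \<forall>y\<in>B. leB x y \<longrightarrow> c x = c y"
  obtains K where "K \<subseteq> hom_set A leA B leB" "chain_on K (pw_le B leA)"
    "card K = h * card B + 1" "\<forall>k\<in>K. \<forall>x\<in>B. \<exists>i\<le>h. k x = c x i"
proof -
  define n where "n = card B"
  obtain pos where pos: "bij_betw pos B {0..<n}" and pm: "\<forall>x\<in>B. \<forall>y\<in>B. leB x y \<longrightarrow> pos x \<le> pos y"
    using linext[OF PB fB] n_def by blast
  have posn: "pos x < n" if "x \<in> B" for x using pos that unfolding bij_betw_def by auto
  define G where "G s = (\<lambda>x\<in>B. c x ((s + pos x) div n))" for s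
  have ile: "(s + pos x) div n \<le> h" if "s \<le> h * n" "x \<in> B" for s x
  proof (cases "n = 0")
    case True thus ?thesis by simp
  next
    case False
    have "s + pos x < (h + 1) * n" using that posn[OF that(2)] by (simp add: algebra_simps)
    hence "(s + pos x) div n < h + 1" using False by (simp add: less_mult_imp_div_less)
    thus ?thesis by simp
  qed
  define K where "K = G ` {0..h*n}"
  have hom: "G s \<in> hom_set A leA B leB" if "s \<le> h * n" for s
    unfolding hom_set_def
  proof (intro CollectI conjI ballI impI)
    show "G s \<in> B \<rightarrow>\<^sub>E A" unfolding G_def using cA ile[OF that] by auto
    fix x y assume xy: "x \<in> B" "y \<in> B" "leB x y"
    have "(s + pos x) div n \<le> (s + pos y) div n" using pm xy by (intro div_le_mono) auto
    thus "leA (G s x) (G s y)" unfolding G_def using xy cm cc ile[OF that] by auto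
  qed
  have mono: "pw_le B leA (G s) (G s')" if "s \<le> s'" "s' \<le> h * n" for s s'
    unfolding pw_le_def
  proof
    fix x assume x: "x \<in> B"
    have "(s + pos x) div n \<le> (s' + pos x) div n" using that by (intro div_le_mono) auto
    thus "leA (G s x) (G s' x)" unfolding G_def using x cm ile[OF that(2) x] by auto
  qed
  have inj: "inj_on G {0..h*n}"
  proof (cases "n = 0")
    case True thus ?thesis by simp
  next
    case False
    have neq: "G s \<noteq> G s'" if ss: "s < s'" "s' \<le> h * n" for s s'
    proof -
      define q where "q = s div n"
      define r where "r = s mod n"
      have sqr: "s = q * n + r" unfolding q_def r_def by simp
      have rn: "r < n" unfolding r_def using False by simp
      have "n - 1 - r \<in> {0..<n}" using rn by auto
      then obtain x where x: "x \<in> B" "pos x = n - 1 - r"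
        using pos unfolding bij_betw_def by (metis imageE)
      have e1: "s + pos x = q * n + (n - 1)" using sqr x rn by simp
      have "(n - 1 + q * n) div n = q + (n - 1) div n" using False by (rule div_mult_self1)
      moreover have "(n - 1) div n = 0" using False by simp
      ultimately have d1: "(s + pos x) div n = q" unfolding e1 by (simp add: add.commute)
      have "q * n + n \<le> s' + pos x" using e1 ss by simp
      hence "(q * n + n) div n \<le> (s' + pos x) div n" by (rule div_le_mono)
      hence d2: "q + 1 \<le> (s' + pos x) div n" using False
        by (metis add.commute div_mult_self3 div_self mult.commute mult_Suc_right Suc_eq_plus1)
      have "c x q \<noteq> c x ((s' + pos x) div n)"
        using ci x d2 ile[OF ss(2) x(1)] by auto
      hence "G s x \<noteq> G s' x" unfolding G_def using x d1 by simp
      thus ?thesis by metis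
    qed
    show ?thesis
    proof (rule inj_onI, rule ccontr)
      fix s s' assume a: "s \<in> {0..h*n}" "s' \<in> {0..h*n}" "G s = G s'" "s \<noteq> s'"
      show False using neq[of s s'] neq[of s' s] a by (cases "s < s'") auto
    qed
  qed
  show ?thesis
  proof (rule that)
    show "K \<subseteq> hom_set A leA B leB" unfolding K_def using hom by auto
    show "chain_on K (pw_le B leA)" unfolding chain_on_def K_def
      using mono by (auto, metis nat_le_linear)
    show "card K = h * card B + 1" unfolding K_def n_def[symmetric] using card_image[OF inj] by simp
    show "\<forall>k\<in>K. \<forall>x\<in>B. \<exists>i\<le>h. k x = c x i" unfolding K_def G_def using ile by fastforce
  qed
qed



lemma comp_rel_sym: "(x, y) \<in> (comparable_rel B leB)\<^sup>* \<Longrightarrow> (y, x) \<in> (comparable_rel B leB)\<^sup>*"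
proof -
  have "sym (comparable_rel B leB)" unfolding sym_def comparable_rel_def by auto
  hence "sym ((comparable_rel B leB)\<^sup>*)" by (rule sym_rtrancl)
  thus "(x, y) \<in> (comparable_rel B leB)\<^sup>* \<Longrightarrow> (y, x) \<in> (comparable_rel B leB)\<^sup>*"
    unfolding sym_def by blast
qed

lemma comp_rel_in: "(x, y) \<in> (comparable_rel B leB)\<^sup>* \<Longrightarrow> x \<in> B \<Longrightarrow> y \<in> B"
  by (induction rule: rtrancl_induct) (simp_all add: comparable_rel_def)

lemma components_eq: "components B leB = (\<lambda>x. (comparable_rel B leB)\<^sup>* `` {x}) ` B"
  unfolding components_def quotient_def by blast

lemma class_eq:
  assumes "(x, y) \<in> (comparable_rel B leB)\<^sup>*"
  shows "(comparable_rel B leB)\<^sup>* `` {x} = (comparable_rel B leB)\<^sup>* `` {y}"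
proof
  show "(comparable_rel B leB)\<^sup>* `` {x} \<subseteq> (comparable_rel B leB)\<^sup>* `` {y}"
  proof
    fix z assume "z \<in> (comparable_rel B leB)\<^sup>* `` {x}"
    hence "(x, z) \<in> (comparable_rel B leB)\<^sup>*" by simp
    moreover have "(y, x) \<in> (comparable_rel B leB)\<^sup>*" using comp_rel_sym[OF assms] .
    ultimately have "(y, z) \<in> (comparable_rel B leB)\<^sup>*" by (rule rtrancl_trans[rotated])
    thus "z \<in> (comparable_rel B leB)\<^sup>* `` {y}" by simp
  qed
  show "(comparable_rel B leB)\<^sup>* `` {y} \<subseteq> (comparable_rel B leB)\<^sup>* `` {x}"
  proof
    fix z assume "z \<in> (comparable_rel B leB)\<^sup>* `` {y}"
    hence "(y, z) \<in> (comparable_rel B leB)\<^sup>*" by simp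
    with assms have "(x, z) \<in> (comparable_rel B leB)\<^sup>*" by (rule rtrancl_trans)
    thus "z \<in> (comparable_rel B leB)\<^sup>* `` {x}" by simp
  qed
qed

lemma D_setI:
  assumes "f \<in> hom_set A leA B leB" "\<forall>x\<in>B. \<forall>y\<in>B. leB x y \<longrightarrow> f x = f y"
  shows "f \<in> D_set A leA B leB"
  unfolding D_set_def
proof (intro CollectI conjI ballI)
  show "f \<in> hom_set A leA B leB" by fact
  fix C x y assume C: "C \<in> components B leB" and xy: "x \<in> C" "y \<in> C"
  obtain z where z: "z \<in> B" "C = (comparable_rel B leB)\<^sup>* `` {z}" using C unfolding components_eq by (rule imageE) blast
  have *: "f z = f u" if "(z, u) \<in> (comparable_rel B leB)\<^sup>*" for u
    using that
  proof (induction rule: rtrancl_induct)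
    case base thus ?case by simp
  next
    case (step u v)
    hence uv: "u \<in> B" "v \<in> B" "leB u v \<or> leB v u" unfolding comparable_rel_def by auto
    have "f u = f v"
    proof (cases "leB u v")
      case True thus ?thesis using assms(2) uv by blast
    next
      case False
      hence "leB v u" using uv by blast
      thus ?thesis using assms(2) uv by (metis (no_types))
    qed
    thus ?case using step.IH by simp
  qed
  have "(z, x) \<in> (comparable_rel B leB)\<^sup>*" "(z, y) \<in> (comparable_rel B leB)\<^sup>*"
    using xy z by blast+
  thus "f x = f y" using *[of x] *[of y] by simp
qed

lemma D_setD:
  assumes "f \<in> D_set A leA B leB" "x \<in> B" "y \<in> B" "leB x y"
  shows "f x = f y"
proof -
  let ?C = "(comparable_rel B leB)\<^sup>* `` {x}"
  have "?C \<in> components B leB" using assms(2) components_eq by blast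
  moreover have "x \<in> ?C" by blast
  moreover have "(x, y) \<in> comparable_rel B leB" using assms(2-4) unfolding comparable_rel_def by blast
  hence "y \<in> ?C" by blast
  ultimately show ?thesis using assms(1) unfolding D_set_def by blast
qed

lemma sum_eq_max:
  fixes hb :: "'b \<Rightarrow> nat"
  assumes "finite B" "\<forall>b\<in>B. hb b \<le> h" "h * card B \<le> (\<Sum>b\<in>B. hb b)"
  shows "\<forall>b\<in>B. hb b = h"
proof (rule ccontr)
  assume "\<not> (\<forall>b\<in>B. hb b = h)"
  then obtain b where "b \<in> B" "hb b < h" using assms(2) le_neq_implies_less by blast
  hence "(\<Sum>b\<in>B. hb b) < (\<Sum>b\<in>B. h)" using assms(1,2) by (intro sum_strict_mono_ex1) auto
  thus False using assms(3) by (simp add: mult.commute)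
qed



lemma interval_sub: "interval A le x y \<subseteq> A" unfolding interval_def by auto

lemma chain_in_F_upper:
  assumes PA: "poset A leA" and fA: "finite A" and fB: "finite B"
    and KF: "K \<subseteq> hom_set A leA B leB" and ch: "chain_on K (pw_le B leA)"
  shows "card K - 1 \<le> height A leA * card B"
proof -
  have "card K \<le> (\<Sum>b\<in>B. height A leA) + 1"
    by (rule chain_upper[OF PA fA fB KF ch, of "\<lambda>_. A"])
       (use KF in \<open>auto simp: hom_set_def PiE_iff\<close>)
  thus ?thesis by (simp add: mult.commute)
qed

lemma part4:
  assumes PA: "poset A leA" and fA: "finite A" and PB: "poset B leB" and fB: "finite B"
    and ne: "A \<noteq> {}"
  shows "height (hom_set A leA B leB) (pw_le B leA) = height A leA * card B"
proof (rule antisym)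
  let ?F = "hom_set A leA B leB"
  have fF: "finite ?F" using hom_set_finite[OF fA fB] .
  obtain K where K: "K \<subseteq> ?F" "chain_on K (pw_le B leA)" "card K - 1 = height ?F (pw_le B leA)"
    using height_ex[OF fF] by blast
  show "height ?F (pw_le B leA) \<le> height A leA * card B"
    using chain_in_F_upper[OF PA fA fB K(1,2)] K(3) by simp
  define h where "h = height A leA"
  obtain C where C: "C \<subseteq> A" "chain_on C leA" "card C = h + 1"
    using height_ex1[OF fA ne] posetD(1)[OF PA] h_def by blast
  obtain e where e: "\<forall>i\<le>h. e i \<in> C" "\<forall>i j. i \<le> j \<longrightarrow> j \<le> h \<longrightarrow> leA (e i) (e j)"
    "\<forall>i j. i < j \<longrightarrow> j \<le> h \<longrightarrow> e i \<noteq> e j"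
    using chain_enum[OF PA C(1) finite_subset[OF C(1) fA] C(2,3)] by blast
  obtain K' where K': "K' \<subseteq> ?F" "chain_on K' (pw_le B leA)" "card K' = h * card B + 1"
  proof (rule chain_construct[OF PA PB fB, of h "\<lambda>_. e"])
    show "\<forall>x\<in>B. \<forall>i\<le>h. e i \<in> A" using e(1) C(1) by blast
    show "\<forall>x\<in>B. \<forall>i j. i \<le> j \<longrightarrow> j \<le> h \<longrightarrow> leA (e i) (e j)" using e(2) by blast
    show "\<forall>x\<in>B. \<forall>i j. i < j \<longrightarrow> j \<le> h \<longrightarrow> e i \<noteq> e j" using e(3) by blast
    show "\<forall>x\<in>B. \<forall>y\<in>B. leB x y \<longrightarrow> e = e" by blast
  qed
  show "height A leA * card B \<le> height ?F (pw_le B leA)"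
    using height_ub[OF fF K'(1,2)] K'(3) h_def by simp
qed



definition enum_ok :: "('a \<Rightarrow> 'a \<Rightarrow> bool) \<Rightarrow> 'a set \<Rightarrow> nat \<Rightarrow> (nat \<Rightarrow> 'a) \<Rightarrow> bool" where
  "enum_ok le S h e \<longleftrightarrow> (\<forall>i\<le>h. e i \<in> S) \<and> (\<forall>i j. i \<le> j \<longrightarrow> j \<le> h \<longrightarrow> le (e i) (e j))
     \<and> (\<forall>i j. i < j \<longrightarrow> j \<le> h \<longrightarrow> e i \<noteq> e j)"

lemma part3:
  assumes PA: "poset A leA" and fA: "finite A" and PB: "poset B leB" and fB: "finite B"
    and ne: "A \<noteq> {}"
    and fF: "f \<in> hom_set A leA B leB" and gF: "g \<in> hom_set A leA B leB"
    and fg: "pw_le B leA f g"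
  shows "height (interval (hom_set A leA B leB) (pw_le B leA) f g) (pw_le B leA)
           = height (hom_set A leA B leB) (pw_le B leA)
         \<longleftrightarrow> f \<in> D_set A leA B leB \<and> g \<in> D_set A leA B leB
            \<and> (\<forall>b\<in>B. height (interval A leA (f b) (g b)) leA = height A leA)"
proof -
  let ?F = "hom_set A leA B leB"
  let ?I = "interval ?F (pw_le B leA) f g"
  define h where "h = height A leA"
  define hb where "hb b = height (interval A leA (f b) (g b)) leA" for b
  have finF: "finite ?F" using hom_set_finite[OF fA fB] .
  have IF: "?I \<subseteq> ?F" by (rule interval_sub)
  have finI: "finite ?I" using finite_subset[OF IF finF] .
  have hF: "height ?F (pw_le B leA) = h * card B" using part4[OF PA fA PB fB ne] h_def by simp
  have FA: "k b \<in> A" if "k \<in> ?F" "b \<in> B" for k b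
    using that unfolding hom_set_def by (auto simp: PiE_iff)
  have fgb: "leA (f b) (g b)" if "b \<in> B" for b using fg that unfolding pw_le_def by blast
  have hb_le: "hb b \<le> h" for b unfolding hb_def h_def by (rule height_mono[OF fA interval_sub])
  have ivne: "f b \<in> interval A leA (f b) (g b)" if "b \<in> B" for b
    unfolding interval_def using FA[OF fF that] fgb[OF that] posetD(1)[OF PA] by blast
  have ivfin: "finite (interval A leA (f b) (g b))" for b using finite_subset[OF interval_sub fA] .
  have ivrefl: "\<forall>x\<in>interval A leA (f b) (g b). leA x x" for b
    unfolding interval_def using posetD(1)[OF PA] by simp
  have upper: "height ?I (pw_le B leA) \<le> (\<Sum>b\<in>B. hb b)"
  proof -
    obtain K where K: "K \<subseteq> ?I" "chain_on K (pw_le B leA)" "card K - 1 = height ?I (pw_le B leA)"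
      using height_ex[OF finI] by blast
    have "card K \<le> (\<Sum>b\<in>B. hb b) + 1" unfolding hb_def
    proof (rule chain_upper[OF PA fA fB _ K(2)])
      show "K \<subseteq> ?F" using K(1) IF by blast
      show "\<forall>b\<in>B. interval A leA (f b) (g b) \<subseteq> A" by (simp add: interval_sub)
      show "\<forall>k\<in>K. \<forall>b\<in>B. k b \<in> interval A leA (f b) (g b)"
      proof (intro ballI)
        fix k b assume k: "k \<in> K" and b: "b \<in> B"
        have "k \<in> ?I" using k K(1) by blast
        hence "k \<in> ?F" "pw_le B leA f k" "pw_le B leA k g" unfolding interval_def by auto
        thus "k b \<in> interval A leA (f b) (g b)" unfolding interval_def pw_le_def using FA[OF _ b] b by blast
      qed
    qed
    thus ?thesis using K(3) by simp
  qed
  show ?thesis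
  proof
    assume eq: "height ?I (pw_le B leA) = height ?F (pw_le B leA)"
    have sumge: "h * card B \<le> (\<Sum>b\<in>B. hb b)" using upper eq hF by simp
    have hbB: "\<forall>b\<in>B. hb b \<le> h" using hb_le by simp
    have allh: "\<forall>b\<in>B. hb b = h" by (rule sum_eq_max[OF fB hbB sumge])
    have exK: "\<forall>b\<in>B. \<exists>K. K \<subseteq> interval A leA (f b) (g b) \<and> chain_on K leA \<and> card K = h + 1"
    proof
      fix b assume b: "b \<in> B"
      have nex: "interval A leA (f b) (g b) \<noteq> {}" using ivne[OF b] by blast
      obtain K where "K \<subseteq> interval A leA (f b) (g b)" "chain_on K leA"
        "card K = height (interval A leA (f b) (g b)) leA + 1"
        using height_ex1[of "interval A leA (f b) (g b)" leA, OF ivfin nex ivrefl] by blast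
      hence "K \<subseteq> interval A leA (f b) (g b)" "chain_on K leA" "card K = hb b + 1"
        unfolding hb_def by simp_all
      thus "\<exists>K. K \<subseteq> interval A leA (f b) (g b) \<and> chain_on K leA \<and> card K = h + 1"
        using allh b by auto
    qed
    from bchoice[OF exK] obtain Kb where
      KbA: "\<forall>b\<in>B. Kb b \<subseteq> interval A leA (f b) (g b) \<and> chain_on (Kb b) leA \<and> card (Kb b) = h + 1"
      by blast
    have Kb: "Kb b \<subseteq> interval A leA (f b) (g b)" "chain_on (Kb b) leA" "card (Kb b) = h + 1"
      if "b \<in> B" for b using KbA that by blast+
    have toolong: False if "b \<in> B" "a \<in> A" "a \<notin> Kb b" "\<forall>k\<in>Kb b. leA a k \<or> leA k a" for a b
    proof -
      have sub: "insert a (Kb b) \<subseteq> A" using Kb(1)[OF that(1)] that(2) unfolding interval_def by blast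
      have "chain_on (insert a (Kb b)) leA"
        using Kb(2)[OF that(1)] that(4) posetD(1)[OF PA that(2)] unfolding chain_on_def by blast
      hence "card (insert a (Kb b)) - 1 \<le> h" using height_ub[OF fA sub] h_def by blast
      moreover have "card (insert a (Kb b)) = h + 2"
        using Kb(3)[OF that(1)] that(3) finite_subset[OF Kb(1)[OF that(1)] ivfin] by simp
      ultimately show False by simp
    qed
    have "f \<in> D_set A leA B leB"
    proof (rule D_setI[OF fF], intro ballI impI, rule ccontr)
      fix x y assume xy: "x \<in> B" "y \<in> B" "leB x y" "f x \<noteq> f y"
      have fxy: "leA (f x) (f y)" using fF xy unfolding hom_set_def by blast
      show False
      proof (rule toolong[OF xy(2) FA[OF fF xy(1)]])
        show "f x \<notin> Kb y"
        proof
          assume "f x \<in> Kb y"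
          hence "leA (f y) (f x)" using Kb(1)[OF xy(2)] unfolding interval_def by blast
          thus False using posetD(2)[OF PA FA[OF fF xy(1)] FA[OF fF xy(2)] fxy] xy(4) by blast
        qed
        show "\<forall>k\<in>Kb y. leA (f x) k \<or> leA k (f x)"
        proof
          fix k assume "k \<in> Kb y"
          hence "k \<in> A" "leA (f y) k" using Kb(1)[OF xy(2)] unfolding interval_def by blast+
          thus "leA (f x) k \<or> leA k (f x)"
            using posetD(3)[OF PA FA[OF fF xy(1)] FA[OF fF xy(2)] _ fxy] by blast
        qed
      qed
    qed
    moreover have "g \<in> D_set A leA B leB"
    proof (rule D_setI[OF gF], intro ballI impI, rule ccontr)
      fix x y assume xy: "x \<in> B" "y \<in> B" "leB x y" "g x \<noteq> g y"
      have gxy: "leA (g x) (g y)" using gF xy unfolding hom_set_def by blast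
      show False
      proof (rule toolong[OF xy(1) FA[OF gF xy(2)]])
        show "g y \<notin> Kb x"
        proof
          assume "g y \<in> Kb x"
          hence "leA (g y) (g x)" using Kb(1)[OF xy(1)] unfolding interval_def by blast
          thus False using posetD(2)[OF PA FA[OF gF xy(1)] FA[OF gF xy(2)] gxy] xy(4) by blast
        qed
        show "\<forall>k\<in>Kb x. leA (g y) k \<or> leA k (g y)"
        proof
          fix k assume "k \<in> Kb x"
          hence "k \<in> A" "leA k (g x)" using Kb(1)[OF xy(1)] unfolding interval_def by blast+
          thus "leA (g y) k \<or> leA k (g y)"
            using posetD(3)[OF PA _ FA[OF gF xy(1)] FA[OF gF xy(2)] _ gxy] by blast
        qed
      qed
    qed
    ultimately show "f \<in> D_set A leA B leB \<and> g \<in> D_set A leA B leB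
            \<and> (\<forall>b\<in>B. height (interval A leA (f b) (g b)) leA = height A leA)"
      using allh unfolding hb_def h_def by blast
  next
    assume rhs: "f \<in> D_set A leA B leB \<and> g \<in> D_set A leA B leB
            \<and> (\<forall>b\<in>B. height (interval A leA (f b) (g b)) leA = height A leA)"
    have le1: "height ?I (pw_le B leA) \<le> height ?F (pw_le B leA)" by (rule height_mono[OF finF IF])
    define c where "c x = (SOME e. enum_ok leA (interval A leA (f x) (g x)) h e)" for x
    have cok: "enum_ok leA (interval A leA (f x) (g x)) h (c x)" if x: "x \<in> B" for x
    proof -
      have nex: "interval A leA (f x) (g x) \<noteq> {}" using ivne[OF x] by blast
      obtain K where K: "K \<subseteq> interval A leA (f x) (g x)" "chain_on K leA"
        "card K = height (interval A leA (f x) (g x)) leA + 1"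
        using height_ex1[of "interval A leA (f x) (g x)" leA, OF ivfin nex ivrefl] by blast
      have "\<forall>b\<in>B. height (interval A leA (f b) (g b)) leA = height A leA" using rhs by (rule conjunct2[OF conjunct2])
      hence "height (interval A leA (f x) (g x)) leA = h" using x h_def by simp
      hence cK: "card K = h + 1" using K(3) by simp
      obtain e where e: "\<forall>i\<le>h. e i \<in> K" "\<forall>i j. i \<le> j \<longrightarrow> j \<le> h \<longrightarrow> leA (e i) (e j)"
        "\<forall>i j. i < j \<longrightarrow> j \<le> h \<longrightarrow> e i \<noteq> e j"
        using chain_enum[OF PA subset_trans[OF K(1) interval_sub] finite_subset[OF K(1) ivfin] K(2) cK] by blast
      have "enum_ok leA (interval A leA (f x) (g x)) h e"
        unfolding enum_ok_def using e K(1) by blast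
      thus ?thesis unfolding c_def by (rule someI[where P="enum_ok leA (interval A leA (f x) (g x)) h"])
    qed
    obtain K' where K': "K' \<subseteq> ?F" "chain_on K' (pw_le B leA)" "card K' = h * card B + 1"
      "\<forall>k\<in>K'. \<forall>x\<in>B. \<exists>i\<le>h. k x = c x i"
    proof (rule chain_construct[OF PA PB fB, of h c])
      show "\<forall>x\<in>B. \<forall>i\<le>h. c x i \<in> A" using cok unfolding enum_ok_def interval_def by blast
      show "\<forall>x\<in>B. \<forall>i j. i \<le> j \<longrightarrow> j \<le> h \<longrightarrow> leA (c x i) (c x j)" using cok unfolding enum_ok_def by blast
      show "\<forall>x\<in>B. \<forall>i j. i < j \<longrightarrow> j \<le> h \<longrightarrow> c x i \<noteq> c x j" using cok unfolding enum_ok_def by blast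
      show "\<forall>x\<in>B. \<forall>y\<in>B. leB x y \<longrightarrow> c x = c y"
      proof (intro ballI impI)
        fix x y assume xy: "x \<in> B" "y \<in> B" "leB x y"
        have "f x = f y" using D_setD[of f A leA B leB x y] rhs xy by blast
        moreover have "g x = g y" using D_setD[of g A leA B leB x y] rhs xy by blast
        ultimately show "c x = c y" unfolding c_def by simp
      qed
    qed
    have "K' \<subseteq> ?I"
    proof
      fix k assume k: "k \<in> K'"
      have "\<forall>x\<in>B. k x \<in> interval A leA (f x) (g x)"
      proof
        fix x assume x: "x \<in> B"
        then obtain i where "i \<le> h" "k x = c x i" using K'(4) k by blast
        thus "k x \<in> interval A leA (f x) (g x)" using cok[OF x] unfolding enum_ok_def by auto
      qed
      thus "k \<in> ?I" using k K'(1) unfolding interval_def pw_le_def by blast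
    qed
    hence "card K' - 1 \<le> height ?I (pw_le B leA)" using height_ub[OF finI _ ] K'(2) by blast
    hence "height ?F (pw_le B leA) \<le> height ?I (pw_le B leA)" using K'(3) hF by simp
    thus "height ?I (pw_le B leA) = height ?F (pw_le B leA)" using le1 by simp
  qed
qed



lemma const_hom:
  assumes PA: "poset A leA" and a: "a \<in> A"
  shows "(\<lambda>x\<in>B. a) \<in> hom_set A leA B leB"
  unfolding hom_set_def using a posetD(1)[OF PA a] by auto

lemma part1:
  assumes PA: "poset A leA"
  shows "hom_set A leA B leB = {} \<longleftrightarrow> A = {} \<and> B \<noteq> {}"
proof
  assume e: "hom_set A leA B leB = {}"
  have "A = {}"
  proof (rule ccontr)
    assume "A \<noteq> {}"
    then obtain a where "a \<in> A" by blast
    thus False using const_hom[OF PA, of a B leB] e by blast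
  qed
  moreover have "B \<noteq> {}"
  proof
    assume "B = {}"
    hence "(\<lambda>_. undefined) \<in> hom_set A leA B leB" unfolding hom_set_def by simp
    thus False using e by blast
  qed
  ultimately show "A = {} \<and> B \<noteq> {}" by blast
next
  assume ab: "A = {} \<and> B \<noteq> {}"
  show "hom_set A leA B leB = {}"
  proof (rule ccontr)
    assume "hom_set A leA B leB \<noteq> {}"
    then obtain f where "f \<in> hom_set A leA B leB" by blast
    hence "f \<in> B \<rightarrow>\<^sub>E A" unfolding hom_set_def by blast
    moreover obtain b where "b \<in> B" using ab by blast
    ultimately have "f b \<in> A" by (auto simp: PiE_iff)
    thus False using ab by blast
  qed
qed

lemma part2a:
  assumes PA: "poset A leA"
  shows "antichain_on (hom_set A leA B leB) (pw_le B leA) \<longleftrightarrow> antichain_on A leA \<or> B = {}"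
proof
  assume ac: "antichain_on (hom_set A leA B leB) (pw_le B leA)"
  show "antichain_on A leA \<or> B = {}"
  proof (cases "B = {}")
    case False
    then obtain b where b: "b \<in> B" by blast
    have "antichain_on A leA" unfolding antichain_on_def
    proof (intro ballI impI)
      fix x y assume xy: "x \<in> A" "y \<in> A" "leA x y"
      have "pw_le B leA (\<lambda>z\<in>B. x) (\<lambda>z\<in>B. y)" unfolding pw_le_def using xy by simp
      hence "(\<lambda>z\<in>B. x) = (\<lambda>z\<in>B. y)" using ac const_hom[OF PA xy(1)] const_hom[OF PA xy(2)]
        unfolding antichain_on_def by blast
      hence "(\<lambda>z\<in>B. x) b = (\<lambda>z\<in>B. y) b" by simp
      thus "x = y" using b by simp
    qed
    thus ?thesis by blast
  qed simp
next
  assume r: "antichain_on A leA \<or> B = {}"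
  show "antichain_on (hom_set A leA B leB) (pw_le B leA)" unfolding antichain_on_def
  proof (intro ballI impI)
    fix f g assume fg: "f \<in> hom_set A leA B leB" "g \<in> hom_set A leA B leB" "pw_le B leA f g"
    have fE: "f \<in> B \<rightarrow>\<^sub>E A" and gE: "g \<in> B \<rightarrow>\<^sub>E A" using fg unfolding hom_set_def by blast+
    show "f = g"
    proof (rule PiE_ext[OF fE gE])
      fix b assume b: "b \<in> B"
      hence "antichain_on A leA" using r by blast
      moreover have "f b \<in> A" "g b \<in> A" using fE gE b by (auto simp: PiE_iff)
      moreover have "leA (f b) (g b)" using fg(3) b unfolding pw_le_def by blast
      ultimately show "f b = g b" unfolding antichain_on_def by blast
    qed
  qed
qed

lemma part2b:
  assumes PA: "poset A leA" and fB: "finite B" and ac: "antichain_on A leA"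
  shows "card (hom_set A leA B leB) = card A ^ card (components B leB)"
proof -
  let ?R = "(comparable_rel B leB)\<^sup>*"
  let ?comps = "components B leB"
  let ?F = "hom_set A leA B leB"
  define cl where "cl x = ?R `` {x}" for x
  define \<Psi> where "\<Psi> h = (\<lambda>x\<in>B. h (cl x))" for h :: "'b set \<Rightarrow> 'a"
  have clc: "cl x \<in> ?comps" if "x \<in> B" for x unfolding cl_def components_eq by (rule imageI[OF that])
  have clx: "x \<in> cl x" for x unfolding cl_def by simp
  have cl_sub: "cl x \<subseteq> B" if "x \<in> B" for x
  proof
    fix y assume "y \<in> cl x"
    hence "(x, y) \<in> ?R" unfolding cl_def by simp
    thus "y \<in> B" using comp_rel_in that by metis
  qed
  have compsE: "\<exists>x\<in>B. C = cl x" if "C \<in> ?comps" for C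
    using that unfolding components_eq cl_def by (rule imageE) (rule bexI)
  have clle: "cl x = cl y" if "x \<in> B" "y \<in> B" "leB x y" for x y
  proof -
    have "(x, y) \<in> comparable_rel B leB" using that unfolding comparable_rel_def by blast
    hence "(x, y) \<in> ?R" by (rule r_into_rtrancl)
    thus ?thesis unfolding cl_def by (rule class_eq)
  qed
  have into: "\<Psi> h \<in> ?F" if h: "h \<in> ?comps \<rightarrow>\<^sub>E A" for h
    unfolding hom_set_def
  proof (intro CollectI conjI ballI impI)
    show "\<Psi> h \<in> B \<rightarrow>\<^sub>E A" unfolding \<Psi>_def using h clc by (auto simp: PiE_iff)
    fix x y assume xy: "x \<in> B" "y \<in> B" "leB x y"
    have "h (cl x) \<in> A" using h clc[OF xy(1)] by (auto simp: PiE_iff)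
    thus "leA (\<Psi> h x) (\<Psi> h y)" unfolding \<Psi>_def using xy clle[OF xy] posetD(1)[OF PA] by simp
  qed
  have inj: "inj_on \<Psi> (?comps \<rightarrow>\<^sub>E A)"
  proof (rule inj_onI)
    fix h h' assume hh: "h \<in> ?comps \<rightarrow>\<^sub>E A" "h' \<in> ?comps \<rightarrow>\<^sub>E A" "\<Psi> h = \<Psi> h'"
    show "h = h'"
    proof (rule PiE_ext[OF hh(1,2)])
      fix C assume "C \<in> ?comps"
      then obtain x where x: "x \<in> B" "C = cl x" using compsE by blast
      have "\<Psi> h x = \<Psi> h' x" using hh(3) by simp
      thus "h C = h' C" unfolding \<Psi>_def using x by simp
    qed
  qed
  have onto: "?F \<subseteq> \<Psi> ` (?comps \<rightarrow>\<^sub>E A)"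
  proof
    fix f assume f: "f \<in> ?F"
    have fE: "f \<in> B \<rightarrow>\<^sub>E A" using f unfolding hom_set_def by blast
    have fD: "f \<in> D_set A leA B leB"
    proof (rule D_setI[OF f], intro ballI impI)
      fix x y assume xy: "x \<in> B" "y \<in> B" "leB x y"
      have "leA (f x) (f y)" using f xy unfolding hom_set_def by blast
      moreover have "f x \<in> A" "f y \<in> A" using fE xy by (auto simp: PiE_iff)
      ultimately show "f x = f y" using ac unfolding antichain_on_def by blast
    qed
    define h where "h = (\<lambda>C\<in>?comps. f (SOME z. z \<in> C))"
    have hE: "h \<in> ?comps \<rightarrow>\<^sub>E A"
    proof -
      have "f (SOME z. z \<in> C) \<in> A" if C: "C \<in> ?comps" for C
      proof -
        obtain x where x: "x \<in> B" "C = cl x" using compsE[OF C] by blast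
        have "(SOME z. z \<in> C) \<in> C" using clx[of x] x by (metis someI)
        hence "(SOME z. z \<in> C) \<in> B" using cl_sub[OF x(1)] x(2) by blast
        thus ?thesis using fE by (auto simp: PiE_iff)
      qed
      thus ?thesis unfolding h_def by auto
    qed
    have "\<Psi> h = f"
    proof
      fix x show "\<Psi> h x = f x"
      proof (cases "x \<in> B")
        case True
        have z: "(SOME z. z \<in> cl x) \<in> cl x" using clx[of x] by (metis someI)
        have "f (SOME z. z \<in> cl x) = f x"
          using fD clc[OF True] z clx[of x] unfolding D_set_def by blast
        thus ?thesis unfolding \<Psi>_def h_def using True clc[OF True] by simp
      next
        case False
        thus ?thesis unfolding \<Psi>_def using fE by (auto simp: PiE_iff extensional_def)
      qed
    qed
    thus "f \<in> \<Psi> ` (?comps \<rightarrow>\<^sub>E A)" using hE by blast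
  qed
  have "\<Psi> ` (?comps \<rightarrow>\<^sub>E A) = ?F" using into onto by blast
  hence "card ?F = card (?comps \<rightarrow>\<^sub>E A)" using card_image[OF inj] by simp
  also have "\<dots> = (\<Prod>C\<in>?comps. card A)"
  proof (rule card_PiE)
    show "finite ?comps" unfolding components_eq using fB by simp
  qed
  also have "\<dots> = card A ^ card ?comps" by simp
  finally show ?thesis .
qed



theorem lemma9:
  fixes A :: "'a set" and leA :: "'a \<Rightarrow> 'a \<Rightarrow> bool"
    and B :: "'b set" and leB :: "'b \<Rightarrow> 'b \<Rightarrow> bool"
  assumes "finite A" "poset A leA" "finite B" "poset B leB"
  defines "F \<equiv> hom_set A leA B leB" and "leF \<equiv> pw_le B leA"
  shows "(F = {} \<longleftrightarrow> A = {} \<and> B \<noteq> {})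
    \<and> ((antichain_on F leF \<longleftrightarrow> antichain_on A leA \<or> B = {})
       \<and> (antichain_on F leF \<longrightarrow>
            ((A \<noteq> {} \<or> B \<noteq> {}) \<longrightarrow> card F = card A ^ card (components B leB))
            \<and> (A = {} \<and> B = {} \<longrightarrow> card F = 1)))
    \<and> (A \<noteq> {} \<longrightarrow> (\<forall>f\<in>F. \<forall>g\<in>F. leF f g \<longrightarrow>
          (height (interval F leF f g) leF = height F leF \<longleftrightarrow>
            f \<in> D_set A leA B leB \<and> g \<in> D_set A leA B leB
            \<and> (\<forall>b\<in>B. height (interval A leA (f b) (g b)) leA = height A leA))))
    \<and> (A \<noteq> {} \<longrightarrow> height F leF = height A leA * card B)"
proof -
  have p1: "F = {} \<longleftrightarrow> A = {} \<and> B \<noteq> {}" unfolding F_def by (rule part1[OF assms(2)])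
  have p2a: "antichain_on F leF \<longleftrightarrow> antichain_on A leA \<or> B = {}"
    unfolding F_def leF_def by (rule part2a[OF assms(2)])
  have p2b: "antichain_on F leF \<longrightarrow>
            ((A \<noteq> {} \<or> B \<noteq> {}) \<longrightarrow> card F = card A ^ card (components B leB))
            \<and> (A = {} \<and> B = {} \<longrightarrow> card F = 1)"
  proof
    assume ac: "antichain_on F leF"
    show "((A \<noteq> {} \<or> B \<noteq> {}) \<longrightarrow> card F = card A ^ card (components B leB))
            \<and> (A = {} \<and> B = {} \<longrightarrow> card F = 1)"
    proof (cases "B = {}")
      case True
      have "F = {\<lambda>_. undefined}" unfolding F_def hom_set_def True by simp
      moreover have "components B leB = {}" unfolding components_eq True by simp
      ultimately show ?thesis by simp
    next
      case False
      hence "antichain_on A leA" using ac p2a by blast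
      hence "card F = card A ^ card (components B leB)"
        unfolding F_def by (rule part2b[OF assms(2) assms(3)])
      thus ?thesis using False by blast
    qed
  qed
  have p3: "A \<noteq> {} \<longrightarrow> (\<forall>f\<in>F. \<forall>g\<in>F. leF f g \<longrightarrow>
          (height (interval F leF f g) leF = height F leF \<longleftrightarrow>
            f \<in> D_set A leA B leB \<and> g \<in> D_set A leA B leB
            \<and> (\<forall>b\<in>B. height (interval A leA (f b) (g b)) leA = height A leA)))"
    unfolding F_def leF_def using part3[OF assms(2) assms(1) assms(4) assms(3)] by blast
  have p4: "A \<noteq> {} \<longrightarrow> height F leF = height A leA * card B"
    unfolding F_def leF_def using part4[OF assms(2) assms(1) assms(4) assms(3)] by blast
  show ?thesis using p1 p2a p2b p3 p4 by blast
qed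


end
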